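(* Let $K$ be a field of characteristic $p$ with $K \neq \mathbb{F}_2$. Then every arithmetic progression $\{a + bt : t \in \mathbb{N}_0\}$ with $a, b \in \mathbb{N}_0$ is a $K$-DML set over split torus.
   Context: For a quasi-projective variety $X$ over $K$, a set $S \subseteq \mathbb{N}_0$ is a $K$-DML set over $X$ if there exist an endomorphism $\Phi$ of $X$ (a morphism $X \to X$ defined over $K$), a point $\alpha \in X(K)$ and a closed subvariety $V \subseteq X$ defined over $K$ (not necessarily irreducible) such that $S = \{ n \in \mathbb{N}_0 : \Phi^n(\alpha) \in V(K)\}$. $S$ is a $K$-DML set over split torus if it is a $K$-DML set over $\mathbb{G}_m^k$ for some $k \in \mathbb{N}$. *)

theory Defs
  imports Main "HOL-Computational_Algebra.Primes"
begin

text \<open>Points of the split torus G_m^k over K: functions nat => K, nonzero on coordinates i < k,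
  and (canonically) zero on coordinates i >= k.\<close>
definition torus_pt :: "nat \<Rightarrow> (nat \<Rightarrow> 'a::field) \<Rightarrow> bool" where
  "torus_pt k x \<longleftrightarrow> (\<forall>i<k. x i \<noteq> 0) \<and> (\<forall>i\<ge>k. x i = 0)"

text \<open>Laurent polynomials in k variables over K: finitely supported coefficient functions
  on exponent vectors e :: nat => int, supported on vectors vanishing at indices >= k.\<close>
definition lpoly :: "nat \<Rightarrow> ((nat \<Rightarrow> int) \<Rightarrow> 'a::field) \<Rightarrow> bool" where
  "lpoly k c \<longleftrightarrow> finite {e. c e \<noteq> 0} \<and> (\<forall>e. c e \<noteq> 0 \<longrightarrow> (\<forall>i\<ge>k. e i = 0))"

definition lmono :: "nat \<Rightarrow> (nat \<Rightarrow> int) \<Rightarrow> (nat \<Rightarrow> 'a::field) \<Rightarrow> 'a" where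
  "lmono k e x = (\<Prod>i<k. x i powi e i)"

definition leval :: "nat \<Rightarrow> ((nat \<Rightarrow> int) \<Rightarrow> 'a::field) \<Rightarrow> (nat \<Rightarrow> 'a) \<Rightarrow> 'a" where
  "leval k c x = (\<Sum>e\<in>{e. c e \<noteq> 0}. c e * lmono k e x)"

definition lmult :: "((nat \<Rightarrow> int) \<Rightarrow> 'a::field) \<Rightarrow> ((nat \<Rightarrow> int) \<Rightarrow> 'a) \<Rightarrow> (nat \<Rightarrow> int) \<Rightarrow> 'a" where
  "lmult c d e = (\<Sum>u\<in>{u. c u \<noteq> 0}. c u * d (\<lambda>i. e i - u i))"

definition lone :: "(nat \<Rightarrow> int) \<Rightarrow> 'a::field" where
  "lone e = (if e = (\<lambda>_. 0) then 1 else 0)"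

definition lunit :: "nat \<Rightarrow> ((nat \<Rightarrow> int) \<Rightarrow> 'a::field) \<Rightarrow> bool" where
  "lunit k c \<longleftrightarrow> lpoly k c \<and> (\<exists>d. lpoly k d \<and> lmult c d = lone)"

text \<open>An endomorphism of G_m^k defined over K is given by a k-tuple of regular functions
  on G_m^k (Laurent polynomials) which are invertible, i.e. units of the coordinate ring.\<close>
definition torus_endo :: "nat \<Rightarrow> (nat \<Rightarrow> (nat \<Rightarrow> int) \<Rightarrow> 'a::field) \<Rightarrow> bool" where
  "torus_endo k f \<longleftrightarrow> (\<forall>i<k. lunit k (f i))"

definition endo_map :: "nat \<Rightarrow> (nat \<Rightarrow> (nat \<Rightarrow> int) \<Rightarrow> 'a::field) \<Rightarrow> (nat \<Rightarrow> 'a) \<Rightarrow> (nat \<Rightarrow> 'a)" where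
  "endo_map k f x = (\<lambda>i. if i < k then leval k (f i) x else 0)"

text \<open>K-DML sets over G_m^k: closed subvarieties V of G_m^k defined over K are the common
  zero loci in G_m^k of finitely many Laurent polynomials over K.\<close>
definition dml_torus :: "'a::field itself \<Rightarrow> nat \<Rightarrow> nat set \<Rightarrow> bool" where
  "dml_torus _ k S \<longleftrightarrow>
     (\<exists>(f :: nat \<Rightarrow> (nat \<Rightarrow> int) \<Rightarrow> 'a) (\<alpha> :: nat \<Rightarrow> 'a) P.
        torus_endo k f \<and> torus_pt k \<alpha> \<and> finite P \<and> (\<forall>c\<in>P. lpoly k c) \<and>
        S = {n. \<forall>c\<in>P. leval k c ((endo_map k f ^^ n) \<alpha>) = 0})"

definition dml_split_torus :: "'a::field itself \<Rightarrow> nat set \<Rightarrow> bool" where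
  "dml_split_torus T S \<longleftrightarrow> (\<exists>k\<ge>1. dml_torus T k S)"

end

theory Submission
  imports Defs
begin

definition dlt :: "nat \<Rightarrow> nat \<Rightarrow> int" where
  "dlt m = (\<lambda>l. if l = m then 1 else 0)"

definition mono1 :: "(nat \<Rightarrow> int) \<Rightarrow> (nat \<Rightarrow> int) \<Rightarrow> 'a::field" where
  "mono1 v = (\<lambda>e. if e = v then 1 else 0)"

lemma supp_mono1: "{e. (mono1 v e :: 'a::field) \<noteq> 0} = {v}"
  by (auto simp: mono1_def)

lemma lmono_dlt:
  assumes "m < k"
  shows "lmono k (dlt m) x = x m"
proof -
  have "lmono k (dlt m) x = (\<Prod>i<k. if i = m then x i else 1)"
    unfolding lmono_def dlt_def by (intro prod.cong) auto
  also have "\<dots> = x m" using assms by (simp add: prod.delta)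
  finally show ?thesis .
qed

lemma lmono_zero: "lmono k (\<lambda>_. 0) x = 1"
  unfolding lmono_def by simp

lemma leval_mono1: "leval k (mono1 v) x = lmono k v x"
  unfolding leval_def supp_mono1 by (simp add: mono1_def)

lemma lpoly_mono1:
  assumes "\<forall>i\<ge>k. v i = 0"
  shows "lpoly k (mono1 v :: _ \<Rightarrow> 'a::field)"
  unfolding lpoly_def supp_mono1 using assms by (auto simp: mono1_def)

lemma lunit_mono1:
  assumes "\<forall>i\<ge>k. v i = 0"
  shows "lunit k (mono1 v :: _ \<Rightarrow> 'a::field)"
proof -
  have "lpoly k (mono1 (\<lambda>i. - v i) :: _ \<Rightarrow> 'a)"
    using assms by (intro lpoly_mono1) auto
  moreover have "lmult (mono1 v :: _ \<Rightarrow> 'a) (mono1 (\<lambda>i. - v i)) = lone"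
  proof
    fix e
    have "lmult (mono1 v :: _ \<Rightarrow> 'a) (mono1 (\<lambda>i. - v i)) e = mono1 (\<lambda>i. - v i) (\<lambda>i. e i - v i)"
      unfolding lmult_def supp_mono1 by (simp add: mono1_def)
    also have "\<dots> = lone e"
    proof -
      have "((\<lambda>i. e i - v i) = (\<lambda>i. - v i)) \<longleftrightarrow> e = (\<lambda>_. 0)"
        by (metis add.inverse_unique diff_add_cancel diff_minus_eq_add minus_diff_eq)
      then show ?thesis by (simp add: mono1_def lone_def)
    qed
    finally show "lmult (mono1 v :: _ \<Rightarrow> 'a) (mono1 (\<lambda>i. - v i)) e = lone e" .
  qed
  ultimately show ?thesis unfolding lunit_def using lpoly_mono1[OF assms] by blast
qed

lemma general:
  fixes t :: "'a::field"
  assumes k: "0 < k" and sig: "\<forall>i<k. \<sigma> i < k" and j: "j < k"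
    and t0: "t \<noteq> 0" and t1: "t \<noteq> 1"
  shows "dml_torus TYPE('a) k {n. (\<sigma> ^^ n) 0 = j}"
proof -
  define f :: "nat \<Rightarrow> (nat \<Rightarrow> int) \<Rightarrow> 'a" where "f = (\<lambda>i. mono1 (dlt (\<sigma> i)))"
  define \<alpha> :: "nat \<Rightarrow> 'a" where "\<alpha> = (\<lambda>i. if i < k then (if i = j then 1 else t) else 0)"
  define c :: "(nat \<Rightarrow> int) \<Rightarrow> 'a" where
    "c = (\<lambda>e. if e = dlt 0 then 1 else if e = (\<lambda>_. 0) then -1 else 0)"
  have dz: "dlt 0 \<noteq> (\<lambda>_. 0)" unfolding dlt_def by (metis one_neq_zero)
  have suppc: "{e. c e \<noteq> 0} = {dlt 0, (\<lambda>_. 0)}"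
    using dz by (auto simp: c_def)
  have endo: "torus_endo k f"
    unfolding torus_endo_def f_def
    using sig by (auto intro!: lunit_mono1 simp: dlt_def)
  have pt: "torus_pt k \<alpha>"
    unfolding torus_pt_def \<alpha>_def using t0 by auto
  have lpc: "lpoly k c"
    unfolding lpoly_def suppc using k by (auto simp: c_def dlt_def)
  have levc: "leval k c x = x 0 - 1" for x
    unfolding leval_def suppc using dz k
    by (simp add: c_def lmono_dlt lmono_zero)
  have em: "endo_map k f x = (\<lambda>i. if i < k then x (\<sigma> i) else 0)" for x
    unfolding endo_map_def f_def
    using sig by (auto simp: leval_mono1 lmono_dlt intro!: ext)
  have orb: "(endo_map k f ^^ n) \<alpha> = (\<lambda>i. if i < k then \<alpha> ((\<sigma> ^^ n) i) else 0)" for n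
  proof (induction n)
    case 0
    then show ?case by (auto simp: \<alpha>_def)
  next
    case (Suc n)
    show ?case
    proof -
      have "(endo_map k f ^^ Suc n) \<alpha> = endo_map k f ((endo_map k f ^^ n) \<alpha>)" by simp
      also have "\<dots> = (\<lambda>i. if i < k then \<alpha> ((\<sigma> ^^ n) (\<sigma> i)) else 0)"
        using sig by (intro ext) (simp add: em Suc)
      also have "\<dots> = (\<lambda>i. if i < k then \<alpha> ((\<sigma> ^^ Suc n) i) else 0)"
        by (simp only: funpow_Suc_right comp_apply)
      finally show ?thesis .
    qed
  qed
  have lt: "(\<sigma> ^^ n) 0 < k" for n
    by (induction n) (auto simp: k sig)
  have S: "{n. (\<sigma> ^^ n) 0 = j} = {n. \<forall>c\<in>{c}. leval k c ((endo_map k f ^^ n) \<alpha>) = 0}"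
  proof -
    have "leval k c ((endo_map k f ^^ n) \<alpha>) = 0 \<longleftrightarrow> (\<sigma> ^^ n) 0 = j" for n
    proof -
      have "leval k c ((endo_map k f ^^ n) \<alpha>) = \<alpha> ((\<sigma> ^^ n) 0) - 1"
        using k by (simp add: levc orb)
      then show ?thesis using lt[of n] t1 by (simp add: \<alpha>_def)
    qed
    then show ?thesis by auto
  qed
  show ?thesis unfolding dml_torus_def
    by (rule exI[of _ f], rule exI[of _ \<alpha>], rule exI[of _ "{c}"])
      (use endo pt lpc S in auto)
qed

theorem lemma2p2:
  fixes a b p :: nat
  assumes "CHAR('a::field) = p" and "prime p"
    and "\<not> (finite (UNIV :: 'a set) \<and> card (UNIV :: 'a set) = 2)"
  shows "dml_split_torus TYPE('a) {n. \<exists>t. n = a + b * t}"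
proof -
  obtain t :: 'a where t0: "t \<noteq> 0" and t1: "t \<noteq> 1"
  proof -
    have "\<exists>t::'a. t \<noteq> 0 \<and> t \<noteq> 1"
    proof (rule ccontr)
      assume "\<not> ?thesis"
      then have eq: "(UNIV :: 'a set) = {0, 1}" by blast
      have c2: "card {0::'a, 1} = 2" by simp
      have "finite (UNIV :: 'a set)" by (subst eq) simp
      moreover have "card (UNIV :: 'a set) = 2" by (subst eq) (rule c2)
      ultimately show False using assms(3) by blast
    qed
    then show ?thesis using that by blast
  qed
  show ?thesis
  proof (cases "b = 0")
    case True
    define \<sigma> where "\<sigma> = (\<lambda>i::nat. min (i + 1) (a + 1))"
    have it: "(\<sigma> ^^ n) 0 = min n (a + 1)" for n
      by (induction n) (auto simp: \<sigma>_def)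
    have "dml_torus TYPE('a) (a + 2) {n. (\<sigma> ^^ n) 0 = a}"
      by (rule general[OF _ _ _ t0 t1]) (auto simp: \<sigma>_def)
    moreover have "{n. (\<sigma> ^^ n) 0 = a} = {n. \<exists>t. n = a + b * t}"
      using True by (auto simp: it)
    ultimately show ?thesis unfolding dml_split_torus_def
      by (intro exI[of _ "a + 2"]) simp
  next
    case False
    define \<sigma> where "\<sigma> = (\<lambda>i::nat. if i + 1 < a + b then i + 1 else a)"
    have it: "(\<sigma> ^^ n) 0 = (if n < a + b then n else a + (n - a) mod b)" for n
    proof (induction n)
      case 0
      then show ?case using False by simp
    next
      case (Suc n)
      have bp: "0 < b" using False by simp
      show ?case
      proof (cases "n < a + b")
        case True
        show ?thesis
        proof (cases "Suc n < a + b")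
          case True
          then show ?thesis using Suc bp by (auto simp: \<sigma>_def)
        next
          case False
          then have "Suc n - a = b" using \<open>n < a + b\<close> by simp
          then show ?thesis using Suc bp False \<open>n < a + b\<close> by (auto simp: \<sigma>_def)
        qed
      next
        case nle: False
        define r where "r = (n - a) mod b"
        have r: "r < b" using bp by (simp add: r_def)
        have IH: "(\<sigma> ^^ n) 0 = a + r" using Suc nle by (simp add: r_def)
        have L: "(\<sigma> ^^ Suc n) 0 = \<sigma> (a + r)" by (simp add: IH)
        have "Suc n - a = Suc (n - a)" using nle by simp
        then have R: "(Suc n - a) mod b = (if Suc r = b then 0 else Suc r)"
          by (simp add: mod_Suc r_def)
        have nn: "\<not> Suc n < a + b" using nle by simp
        show ?thesis
        proof (cases "Suc r = b")
          case True
          then show ?thesis using L R nn by (simp add: \<sigma>_def)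
        next
          case False
          then have "Suc r < b" using r by simp
          then show ?thesis using L R nn False by (simp add: \<sigma>_def)
        qed
      qed
    qed
    have "dml_torus TYPE('a) (a + b) {n. (\<sigma> ^^ n) 0 = a}"
      by (rule general[OF _ _ _ t0 t1]) (use False in \<open>auto simp: \<sigma>_def\<close>)
    moreover have "{n. (\<sigma> ^^ n) 0 = a} = {n. \<exists>t. n = a + b * t}"
    proof (intro set_eqI iffI; simp only: mem_Collect_eq it)
      fix n assume h: "(if n < a + b then n else a + (n - a) mod b) = a"
      show "\<exists>t. n = a + b * t"
      proof (cases "n < a + b")
        case True
        then show ?thesis using h by (intro exI[of _ 0]) simp
      next
        case nl: False
        then have "(n - a) mod b = 0" using h by simp
        then obtain q where "n - a = b * q" by (metis mod_0_imp_dvd dvdE)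
        then show ?thesis using nl by (intro exI[of _ q]) simp
      qed
    next
      fix n assume "\<exists>t. n = a + b * t"
      then obtain q where q: "n = a + b * q" by blast
      show "(if n < a + b then n else a + (n - a) mod b) = a"
      proof (cases "q = 0")
        case True then show ?thesis using q by simp
      next
        case qn: False
        then have "\<not> n < a + b" using q False
          by (metis add_less_cancel_left mult.right_neutral mult_le_mono2 not_le less_one neq0_conv)
        then show ?thesis using q by simp
      qed
    qed
    ultimately show ?thesis unfolding dml_split_torus_def
      using False by (intro exI[of _ "a + b"]) simp
  qed
qed

end
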